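(* Let $G$ be the discrete Heisenberg group of upper unitriangular $3\times3$ integer matrices $\begin{pmatrix}1&a&b\\0&1&c\\0&0&1\end{pmatrix}$, $a,b,c\in\mathbb Z$, and let $A$ be its center $\{a=c=0\}$, identified with $\mathbb Z$ via the entry $b$. Let $d(b_1,b_2)=|b_1-b_2|$ on $A$. Then there is no left invariant metric $\underline d$ on $G$ with $\underline d|_A=d$ (in particular no two-sided invariant one). *)

theory Defs
  imports Complex_Main
begin

text \<open>The discrete Heisenberg group: the matrix with entries a (1,2), b (1,3), c (2,3)
  is represented by the triple (a, b, c) of integers.\<close>

type_synonym heis = "int \<times> int \<times> int"

text \<open>Matrix multiplication of upper unitriangular 3x3 integer matrices.\<close>
definition heis_mult :: "heis \<Rightarrow> heis \<Rightarrow> heis" where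
  "heis_mult g h = (case g of (a, b, c) \<Rightarrow> case h of (a', b', c') \<Rightarrow>
      (a + a', b + b' + a * c', c + c'))"

definition heis_center :: "int \<Rightarrow> heis" where
  "heis_center b = (0, b, 0)"

definition is_metric :: "('a \<Rightarrow> 'a \<Rightarrow> real) \<Rightarrow> bool" where
  "is_metric D \<longleftrightarrow>
     (\<forall>x y. D x y \<ge> 0) \<and>
     (\<forall>x y. D x y = 0 \<longleftrightarrow> x = y) \<and>
     (\<forall>x y. D x y = D y x) \<and>
     (\<forall>x y z. D x z \<le> D x y + D y z)"

definition left_invariant :: "(heis \<Rightarrow> heis \<Rightarrow> real) \<Rightarrow> bool" where
  "left_invariant D \<longleftrightarrow> (\<forall>g x y. D (heis_mult g x) (heis_mult g y) = D x y)"

end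

theory Submission
  imports Defs
begin

lemma step_inv:
  assumes "left_invariant D"
  shows "D g (heis_mult g s) = D (0,0,0) s"
proof -
  have "heis_mult g (0,0,0) = g" by (cases g) (auto simp: heis_mult_def)
  then show ?thesis using assms unfolding left_invariant_def by metis
qed

theorem mainTheorem9:
  shows "\<not> (\<exists>D :: heis \<Rightarrow> heis \<Rightarrow> real.
            is_metric D \<and> left_invariant D \<and>
            (\<forall>b1 b2. D (heis_center b1) (heis_center b2) = real_of_int \<bar>b1 - b2\<bar>))"
proof
  assume "\<exists>D :: heis \<Rightarrow> heis \<Rightarrow> real.
            is_metric D \<and> left_invariant D \<and>
            (\<forall>b1 b2. D (heis_center b1) (heis_center b2) = real_of_int \<bar>b1 - b2\<bar>)"
  then obtain D :: "heis \<Rightarrow> heis \<Rightarrow> real" where M: "is_metric D" and L: "left_invariant D"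
    and C: "\<forall>b1 b2. D (heis_center b1) (heis_center b2) = real_of_int \<bar>b1 - b2\<bar>" by blast
  have tri: "\<And>x y z. D x z \<le> D x y + D y z" and sym: "\<And>x y. D x y = D y x"
    using M unfolding is_metric_def by auto
  have z0: "D x x = 0" for x using M unfolding is_metric_def by blast
  define A where "A = D (0,0,0) (1,0,0)"
  define B where "B = D (0,0,0) (0,0,1)"
  have pa: "D (0,0,0) (int n,0,0) \<le> real n * A" for n
  proof (induction n)
    case 0 then show ?case using z0 by simp
  next
    case (Suc n)
    have "heis_mult (int n,0,0) (1,0,0) = (int (Suc n),0,0)" by (simp add: heis_mult_def)
    then have e: "D (int n,0,0) (int (Suc n),0,0) = A"
      using step_inv[OF L, of "(int n,0,0)" "(1,0,0)"] A_def by simp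
    have "D (0,0,0) (int (Suc n),0,0) \<le> D (0,0,0) (int n,0,0) + D (int n,0,0) (int (Suc n),0,0)"
      by (rule tri)
    then show ?case using Suc e by (simp add: algebra_simps)
  qed
  have pb: "D (0,0,0) (0,0,int n) \<le> real n * B" for n
  proof (induction n)
    case 0 then show ?case using z0 by simp
  next
    case (Suc n)
    have "heis_mult (0,0,int n) (0,0,1) = (0,0,int (Suc n))" by (simp add: heis_mult_def)
    then have e: "D (0,0,int n) (0,0,int (Suc n)) = B"
      using step_inv[OF L, of "(0,0,int n)" "(0,0,1)"] B_def by simp
    have "D (0,0,0) (0,0,int (Suc n)) \<le> D (0,0,0) (0,0,int n) + D (0,0,int n) (0,0,int (Suc n))"
      by (rule tri)
    then show ?case using Suc e by (simp add: algebra_simps)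
  qed
  have key: "real n * real n \<le> 2 * real n * (A + B)" for n :: nat
  proof -
    define m where "m = int n"
    define X where "X = (m,0::int,0::int)"
    define Y where "Y = (0::int,0::int,m)"
    define Xi where "Xi = (-m,0::int,0::int)"
    define Yi where "Yi = (0::int,0::int,-m)"
    define e where "e = (0::int,0::int,0::int)"
    have XY: "heis_mult X Y = (m, m*m, m)" by (simp add: X_def Y_def heis_mult_def)
    have XYXi: "heis_mult (m, m*m, m) Xi = (0, m*m, m)" by (simp add: Xi_def heis_mult_def)
    have Z: "heis_mult (0, m*m, m) Yi = (0, m*m, 0)" by (simp add: Yi_def heis_mult_def)
    have XXi: "heis_mult X Xi = e" by (simp add: X_def Xi_def e_def heis_mult_def)
    have YYi: "heis_mult Y Yi = e" by (simp add: Y_def Yi_def e_def heis_mult_def)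
    have d1: "D X (m, m*m, m) = D e Y" using step_inv[OF L, of X Y] XY e_def by simp
    have d2: "D (m, m*m, m) (0, m*m, m) = D e Xi" using step_inv[OF L, of "(m, m*m, m)" Xi] XYXi e_def by simp
    have d3: "D (0, m*m, m) (0, m*m, 0) = D e Yi" using step_inv[OF L, of "(0, m*m, m)" Yi] Z e_def by simp
    have i1: "D e Xi = D e X" using step_inv[OF L, of X Xi] XXi sym e_def by metis
    have i2: "D e Yi = D e Y" using step_inv[OF L, of Y Yi] YYi sym e_def by metis
    have "D e (0, m*m, 0) \<le> D e X + D X (m, m*m, m) + D (m, m*m, m) (0, m*m, m) + D (0, m*m, m) (0, m*m, 0)"
      using tri[of e "(0, m*m, 0)" "(0, m*m, m)"] tri[of e "(0, m*m, m)" "(m, m*m, m)"] tri[of e "(m, m*m, m)" X]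
      by linarith
    also have "\<dots> = 2 * D e X + 2 * D e Y" using d1 d2 d3 i1 i2 by simp
    also have "\<dots> \<le> 2 * (real n * A) + 2 * (real n * B)"
      using pa[of n] pb[of n] by (simp add: e_def X_def Y_def m_def)
    finally have "D e (0, m*m, 0) \<le> 2 * real n * (A + B)" by (simp add: algebra_simps)
    moreover have "D e (0, m*m, 0) = real n * real n"
      using C[rule_format, of 0 "m*m"] by (simp add: heis_center_def e_def m_def)
    ultimately show ?thesis by simp
  qed
  obtain n :: nat where n: "real n > 2 * (A + B)" using reals_Archimedean2 by blast
  have "0 \<le> A" "0 \<le> B" using M unfolding is_metric_def A_def B_def by auto
  then have "real n > 0" using n by (smt (verit))
  then have "real n \<le> 2 * (A + B)" using key[of n]
    by (metis mult.assoc mult.commute mult_le_cancel_left_pos)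
  then show False using n by simp
qed

end
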